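(* Suppose the network connectivity assumption and the Poincaré scaling assumption hold, and let $C_\Pi>0$ be a constant (independent of $H$) such that $|v-\Pi_Hv|_M\le C_\Pi H|v|_L$ for all $v\in\hat V$, $H\in\mathcal H$. Let $H\in\mathcal H$, $f\in\hat V$, let $u=\mathcal K^{-1}f$, and let $u_H\in V_H:=\mathcal K^{-1}\mathbb P^0(\mathcal T_H)$ be the Galerkin approximation: $(Ku_H,v_H)=(Mf,v_H)$ for all $v_H\in V_H$. Then $$|u-u_H|_L\le C_\Pi\alpha^{-1}H\,|f-\Pi_Hf|_M\le C_\Pi^2\alpha^{-1}H^2\,|f|_L .$$
   Context: Let $d\in\mathbb N$, $\Omega=[0,1]^d$, and let $\mathcal G=(\mathcal N,\mathcal E)$ be a finite connected graph with at least two nodes, whose nodes $\mathcal N$ are distinct points of $\Omega$. Write $x\sim y$ if $\{x,y\}\in\mathcal E$, and $|x-y|$ for the Euclidean distance. For $\omega\subset\Omega$ let $\mathcal N(\omega)=\mathcal N\cap\omega$. Let $\Gamma\subset\partial\Omega$ with $\mathcal N(\Gamma)\ne\emptyset$. $\hat V$ is the space of real functions on $\mathcal N$ with $(u,v)=\sum_xu(x)v(x)$; $V=\{v\in\hat V:v=0\text{ on }\mathcal N(\Gamma)\}$. Symmetric operators: $(M_xv,w)=\tfrac12\sum_{y\sim x}|x-y|v(x)w(x)$, $(L_xv,w)=\tfrac12\sum_{y\sim x}\frac{(v(x)-v(y))(w(x)-w(y))}{|x-y|}$, $(K_xv,w)=\tfrac12\sum_{y\sim x}\gamma_{xy}\frac{(v(x)-v(y))(w(x)-w(y))}{|x-y|}$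 with $\gamma_{xy}=\gamma_{yx}\in[\alpha,\beta]$, $0<\alpha\le\beta<\infty$; $M=\sum_xM_x$, $L=\sum_xL_x$, $K=\sum_xK_x$; for $\omega\subset\Omega$, $M_\omega=\sum_{x\in\mathcal N(\omega)}M_x$, $L_\omega=\sum_{x\in\mathcal N(\omega)}L_x$. Seminorms $|v|_M^2=(Mv,v)$, $|v|_L^2=(Lv,v)$, $|v|_{M,\omega}^2=(M_\omega v,v)$, $|v|_{L,\omega}^2=(L_\omega v,v)$. The solution operator $\mathcal K^{-1}:\hat V\to V$ maps $f$ to the unique $u\in V$ with $(Ku,v)=(Mf,v)$ for all $v\in V$. Mesh: for $H>0$ with $1/H\in\mathbb N$, $\mathcal T_H$ consists of the cubes $I_1\times\dots\times I_d$, $I_i=[a_i,a_i+H)$, $a_i\in\{0,H,\dots,1-H\}$, except $I_i=[a_i,a_i+H]$ when $a_i+H=1$. $\mathsf N(\omega)$ is the union of all $T\in\mathcal T_H$ with $\overline T\cap\overline\omega\neq\emptyset$. $\mathcal H$ is a finite set of admissible mesh sizes. $\mathbf 1_T$ is the indicator of nodes in $T$; $\mathbb P^0(\mathcal T_H)=\mathrm{span}\{\mathbf 1_T\}$; $\Pi_Hv=\sum_T\frac{(M_Tv,1)}{|1|_{M,T}^2}\mathbf 1_T$ (term $0$ if $T$ has no node). Network connectivity assumption: for every $H\in\mathcal H$ and $T\in\mathcal T_H$ there is a connected subgraph of $\mathcal G$ containing all edges with at least one endpoint in $T$ and only edges with both endpoints in $\mathsf N(T)$. Poincaré scaling assumption: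 there is $\mu>0$ such that for all $H\in\mathcal H$, $T\in\mathcal T_H$, $v\in\hat V$ there exists $c\in\mathbb R$ with $|v-c|_{M,T}\le\mu H|v|_{L,\mathsf N(T)}$. *)

theory Defs
  imports "HOL-Analysis.Analysis"
begin

text \<open>The graph is given by a finite node set N and a symmetric edge relation E \<subseteq> N \<times> N;
  x \<sim> y means (x,y) \<in> E. Grid functions are functions real^'d \<Rightarrow> real (only values on N matter).\<close>

definition Omega :: "(real^'d) set" where
  "Omega = {x. \<forall>i. 0 \<le> x$i \<and> x$i \<le> 1}"

definition nbrs :: "(real^'d) set \<Rightarrow> ((real^'d) \<times> (real^'d)) set \<Rightarrow> real^'d \<Rightarrow> (real^'d) set" where
  "nbrs N E x = {y\<in>N. (x,y) \<in> E}"

definition Mloc :: "(real^'d) set \<Rightarrow> ((real^'d) \<times> (real^'d)) set \<Rightarrow> real^'d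
     \<Rightarrow> (real^'d \<Rightarrow> real) \<Rightarrow> (real^'d \<Rightarrow> real) \<Rightarrow> real" where
  "Mloc N E x v w = (1/2) * (\<Sum>y\<in>nbrs N E x. dist x y * v x * w x)"

definition Lloc :: "(real^'d) set \<Rightarrow> ((real^'d) \<times> (real^'d)) set \<Rightarrow> real^'d
     \<Rightarrow> (real^'d \<Rightarrow> real) \<Rightarrow> (real^'d \<Rightarrow> real) \<Rightarrow> real" where
  "Lloc N E x v w = (1/2) * (\<Sum>y\<in>nbrs N E x. (v x - v y) * (w x - w y) / dist x y)"

definition Kloc :: "(real^'d) set \<Rightarrow> ((real^'d) \<times> (real^'d)) set \<Rightarrow> (real^'d \<Rightarrow> real^'d \<Rightarrow> real)
     \<Rightarrow> real^'d \<Rightarrow> (real^'d \<Rightarrow> real) \<Rightarrow> (real^'d \<Rightarrow> real) \<Rightarrow> real" where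
  "Kloc N E \<gamma> x v w = (1/2) * (\<Sum>y\<in>nbrs N E x. \<gamma> x y * (v x - v y) * (w x - w y) / dist x y)"

definition Mform_on where
  "Mform_on N E \<omega> v w = (\<Sum>x\<in>N \<inter> \<omega>. Mloc N E x v w)"
definition Lform_on where
  "Lform_on N E \<omega> v w = (\<Sum>x\<in>N \<inter> \<omega>. Lloc N E x v w)"
definition Mform where
  "Mform N E v w = (\<Sum>x\<in>N. Mloc N E x v w)"
definition Lform where
  "Lform N E v w = (\<Sum>x\<in>N. Lloc N E x v w)"
definition Kform where
  "Kform N E \<gamma> v w = (\<Sum>x\<in>N. Kloc N E \<gamma> x v w)"

definition semiM where "semiM N E v = sqrt (Mform N E v v)"
definition semiL where "semiL N E v = sqrt (Lform N E v v)"
definition semiM_on where "semiM_on N E \<omega> v = sqrt (Mform_on N E \<omega> v v)"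
definition semiL_on where "semiL_on N E \<omega> v = sqrt (Lform_on N E \<omega> v v)"

definition Vsp :: "(real^'d) set \<Rightarrow> (real^'d) set \<Rightarrow> (real^'d \<Rightarrow> real) set" where
  "Vsp N \<Gamma> = {v. \<forall>x\<in>N \<inter> \<Gamma>. v x = 0}"

text \<open>u = K^{-1} f : u \<in> V and (K u, v) = (M f, v) for all v \<in> V\<close>
definition solves where
  "solves N E \<gamma> \<Gamma> f u \<longleftrightarrow> u \<in> Vsp N \<Gamma> \<and> (\<forall>v\<in>Vsp N \<Gamma>. Kform N E \<gamma> u v = Mform N E f v)"

definition cube :: "real \<Rightarrow> ('d \<Rightarrow> nat) \<Rightarrow> (real^'d) set" where
  "cube H k = {x. \<forall>i. real (k i) * H \<le> x$i \<and>
       (x$i < real (k i) * H + H \<or> (real (k i) * H + H = 1 \<and> x$i \<le> 1))}"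

definition cells :: "real \<Rightarrow> (real^'d) set set" where
  "cells H = {cube H k | k. \<forall>i. real (k i) * H + H \<le> 1}"

definition patch :: "real \<Rightarrow> (real^'d) set \<Rightarrow> (real^'d) set" where
  "patch H \<omega> = \<Union>{T\<in>cells H. closure T \<inter> closure \<omega> \<noteq> {}}"

definition P0 :: "real \<Rightarrow> (real^'d \<Rightarrow> real) set" where
  "P0 H = {g. \<exists>c. g = (\<lambda>z. \<Sum>T\<in>cells H. c T * indicator T z)}"

definition PiH :: "(real^'d) set \<Rightarrow> ((real^'d) \<times> (real^'d)) set \<Rightarrow> real
     \<Rightarrow> (real^'d \<Rightarrow> real) \<Rightarrow> (real^'d \<Rightarrow> real)" where
  "PiH N E H v = (\<lambda>z. \<Sum>T\<in>cells H.
      (if N \<inter> T = {} then 0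
       else Mform_on N E T v (\<lambda>_. 1) / Mform_on N E T (\<lambda>_. 1) (\<lambda>_. 1)) * indicator T z)"

definition VH where
  "VH N E \<gamma> \<Gamma> H = {u. \<exists>g\<in>P0 H. solves N E \<gamma> \<Gamma> g u}"

definition network_connectivity where
  "network_connectivity N E Hs \<longleftrightarrow> (\<forall>H\<in>Hs. \<forall>T\<in>cells H. \<exists>F. F \<subseteq> E \<and> sym F \<and>
      (\<forall>x\<in>Field F. \<forall>y\<in>Field F. (x,y) \<in> F\<^sup>*) \<and>
      (\<forall>(x,y)\<in>E. x \<in> T \<or> y \<in> T \<longrightarrow> (x,y) \<in> F) \<and>
      (\<forall>(x,y)\<in>F. x \<in> patch H T \<and> y \<in> patch H T))"

definition poincare_scaling where
  "poincare_scaling N E Hs \<longleftrightarrow> (\<exists>\<mu>>0. \<forall>H\<in>Hs. \<forall>T\<in>cells H. \<forall>v.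
      \<exists>c::real. semiM_on N E T (\<lambda>x. v x - c) \<le> \<mu> * H * semiL_on N E (patch H T) v)"

end

theory Submission
  imports Defs "HOL-Library.Function_Algebras"
begin



lemma Kform_lin2: "Kform N E \<gamma> w (\<lambda>x. a * v1 x + b * v2 x) = a * Kform N E \<gamma> w v1 + b * Kform N E \<gamma> w v2"
proof -
  have "\<And>x y. \<gamma> x y * (w x - w y) * ((a * v1 x + b * v2 x) - (a * v1 y + b * v2 y)) / dist x y
     = a * (\<gamma> x y * (w x - w y) * (v1 x - v1 y) / dist x y) + b * (\<gamma> x y * (w x - w y) * (v2 x - v2 y) / dist x y)"
    by (simp add: algebra_simps add_divide_distrib diff_divide_distrib)
  then show ?thesis unfolding Kform_def Kloc_def
    by (simp add: sum.distrib sum_distrib_left algebra_simps)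
qed

lemma Kform_lin1: "Kform N E \<gamma> (\<lambda>x. a * v1 x + b * v2 x) w = a * Kform N E \<gamma> v1 w + b * Kform N E \<gamma> v2 w"
proof -
  have "\<And>x y. \<gamma> x y * ((a * v1 x + b * v2 x) - (a * v1 y + b * v2 y)) * (w x - w y) / dist x y
     = a * (\<gamma> x y * (v1 x - v1 y) * (w x - w y) / dist x y) + b * (\<gamma> x y * (v2 x - v2 y) * (w x - w y) / dist x y)"
    by (simp add: algebra_simps add_divide_distrib diff_divide_distrib)
  then show ?thesis unfolding Kform_def Kloc_def
    by (simp add: sum.distrib sum_distrib_left algebra_simps)
qed

lemma Kform_sym: "Kform N E \<gamma> v w = Kform N E \<gamma> w v"
  unfolding Kform_def Kloc_def by (simp add: mult.commute mult.left_commute)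

lemma Mform_lin2: "Mform N E w (\<lambda>x. a * v1 x + b * v2 x) = a * Mform N E w v1 + b * Mform N E w v2"
  unfolding Mform_def Mloc_def
  by (simp add: sum.distrib sum_distrib_left algebra_simps)

lemma Mform_lin1: "Mform N E (\<lambda>x. a * v1 x + b * v2 x) w = a * Mform N E v1 w + b * Mform N E v2 w"
  unfolding Mform_def Mloc_def
  by (simp add: sum.distrib sum_distrib_left algebra_simps)

lemma Mform_sym: "Mform N E v w = Mform N E w v"
  unfolding Mform_def Mloc_def by (simp add: mult.commute mult.left_commute)


lemma Kform_diff1: "Kform N E \<gamma> (\<lambda>x. v1 x - v2 x) w = Kform N E \<gamma> v1 w - Kform N E \<gamma> v2 w"
  using Kform_lin1[of N E \<gamma> 1 v1 "-1" v2 w] by simp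
lemma Kform_diff2: "Kform N E \<gamma> w (\<lambda>x. v1 x - v2 x) = Kform N E \<gamma> w v1 - Kform N E \<gamma> w v2"
  using Kform_lin2[of N E \<gamma> w 1 v1 "-1" v2] by simp
lemma Mform_diff1: "Mform N E (\<lambda>x. v1 x - v2 x) w = Mform N E v1 w - Mform N E v2 w"
  using Mform_lin1[of N E 1 v1 "-1" v2 w] by simp
lemma Mform_diff2: "Mform N E w (\<lambda>x. v1 x - v2 x) = Mform N E w v1 - Mform N E w v2"
  using Mform_lin2[of N E w 1 v1 "-1" v2] by simp


lemma Kform_cong2:
  assumes h: "\<And>x. x \<in> N \<Longrightarrow> v x = v' x"
  shows "Kform N E \<gamma> w v = Kform N E \<gamma> w v'"
proof -
  have "\<And>x. x \<in> N \<Longrightarrow> Kloc N E \<gamma> x w v = Kloc N E \<gamma> x w v'"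
    unfolding Kloc_def by (rule arg_cong[where f="\<lambda>t. (1/2)*t"], rule sum.cong[OF refl]) (simp add: h nbrs_def)
  then show ?thesis unfolding Kform_def by (rule sum.cong[OF refl])
qed

lemma Mform_cong2:
  assumes h: "\<And>x. x \<in> N \<Longrightarrow> v x = v' x"
  shows "Mform N E w v = Mform N E w v'"
proof -
  have "\<And>x. x \<in> N \<Longrightarrow> Mloc N E x w v = Mloc N E x w v'"
    unfolding Mloc_def by (rule arg_cong[where f="\<lambda>t. (1/2)*t"], rule sum.cong[OF refl]) (simp add: h nbrs_def)
  then show ?thesis unfolding Mform_def by (rule sum.cong[OF refl])
qed


lemma Kform_sum2: "finite S \<Longrightarrow> Kform N E \<gamma> w (\<lambda>x. \<Sum>z\<in>S. c z * h z x) = (\<Sum>z\<in>S. c z * Kform N E \<gamma> w (h z))"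
proof (induction S rule: finite_induct)
  case empty
  show ?case using Kform_lin2[of N E \<gamma> w 0 w 0 w] by simp
next
  case (insert a S)
  have "Kform N E \<gamma> w (\<lambda>x. \<Sum>z\<in>insert a S. c z * h z x)
      = Kform N E \<gamma> w (\<lambda>x. c a * h a x + 1 * (\<Sum>z\<in>S. c z * h z x))"
    using insert by simp
  also have "\<dots> = c a * Kform N E \<gamma> w (h a) + 1 * Kform N E \<gamma> w (\<lambda>x. \<Sum>z\<in>S. c z * h z x)"
    by (rule Kform_lin2)
  finally show ?case using insert by simp
qed

lemma Mform_sum2: "finite S \<Longrightarrow> Mform N E w (\<lambda>x. \<Sum>z\<in>S. c z * h z x) = (\<Sum>z\<in>S. c z * Mform N E w (h z))"
proof (induction S rule: finite_induct)
  case empty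
  show ?case using Mform_lin2[of N E w 0 w 0 w] by simp
next
  case (insert a S)
  have "Mform N E w (\<lambda>x. \<Sum>z\<in>insert a S. c z * h z x)
      = Mform N E w (\<lambda>x. c a * h a x + 1 * (\<Sum>z\<in>S. c z * h z x))"
    using insert by simp
  also have "\<dots> = c a * Mform N E w (h a) + 1 * Mform N E w (\<lambda>x. \<Sum>z\<in>S. c z * h z x)"
    by (rule Mform_lin2)
  finally show ?case using insert by simp
qed


definition dl :: "'a \<Rightarrow> 'a \<Rightarrow> real" where "dl z x = (if x = z then 1 else 0)"

lemma expand_fun: assumes "finite N" "x \<in> N" shows "v x = (\<Sum>z\<in>N. v z * dl z x)"
proof -
  have "(\<Sum>z\<in>N. v z * dl z x) = (\<Sum>z\<in>N. if z = x then v z else 0)"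
    by (rule sum.cong[OF refl]) (simp add: dl_def)
  also have "\<dots> = v x" using assms by (simp add: sum.delta')
  finally show ?thesis by simp
qed

lemma Kform_expand: assumes fin: "finite N" shows "Kform N E \<gamma> w v = (\<Sum>z\<in>N. v z * Kform N E \<gamma> w (dl z))"
proof -
  have "Kform N E \<gamma> w v = Kform N E \<gamma> w (\<lambda>x. \<Sum>z\<in>N. v z * dl z x)"
    by (rule Kform_cong2, rule expand_fun[OF fin])
  also have "\<dots> = (\<Sum>z\<in>N. v z * Kform N E \<gamma> w (dl z))" by (rule Kform_sum2[OF fin])
  finally show ?thesis .
qed

lemma Mform_expand: assumes fin: "finite N" shows "Mform N E w v = (\<Sum>z\<in>N. v z * Mform N E w (dl z))"
proof -
  have "Mform N E w v = Mform N E w (\<lambda>x. \<Sum>z\<in>N. v z * dl z x)"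
    by (rule Mform_cong2, rule expand_fun[OF fin])
  also have "\<dots> = (\<Sum>z\<in>N. v z * Mform N E w (dl z))" by (rule Mform_sum2[OF fin])
  finally show ?thesis .
qed


lemma nbrs_dist_pos: "irrefl E \<Longrightarrow> y \<in> nbrs N E x \<Longrightarrow> dist x y > 0"
  unfolding nbrs_def irrefl_def by auto

lemma Kform_ge_L:
  assumes "irrefl E" and "\<forall>(x,y)\<in>E. \<alpha> \<le> \<gamma> x y" and "\<alpha> \<ge> 0"
  shows "\<alpha> * Lform N E w w \<le> Kform N E \<gamma> w w"
proof -
  have "\<alpha> * Lform N E w w = (\<Sum>x\<in>N. (1/2) * (\<Sum>y\<in>nbrs N E x. \<alpha> * ((w x - w y) * (w x - w y) / dist x y)))"
    unfolding Lform_def Lloc_def by (simp add: sum_distrib_left mult.left_commute)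
  also have "\<dots> \<le> (\<Sum>x\<in>N. (1/2) * (\<Sum>y\<in>nbrs N E x. \<gamma> x y * ((w x - w y) * (w x - w y) / dist x y)))"
  proof (intro sum_mono mult_left_mono)
    fix x y assume y: "y \<in> nbrs N E x"
    then have "\<alpha> \<le> \<gamma> x y" using assms(2) unfolding nbrs_def by auto
    moreover have "(w x - w y) * (w x - w y) / dist x y \<ge> 0"
      using nbrs_dist_pos[OF assms(1) y] by simp
    ultimately show "\<alpha> * ((w x - w y) * (w x - w y) / dist x y) \<le> \<gamma> x y * ((w x - w y) * (w x - w y) / dist x y)"
      by (rule mult_right_mono)
  qed simp
  also have "\<dots> = Kform N E \<gamma> w w"
    unfolding Kform_def Kloc_def by (simp add: mult.assoc)
  finally show ?thesis .
qed

lemma Lform_nonneg: "irrefl E \<Longrightarrow> Lform N E w w \<ge> 0"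
proof -
  assume irr: "irrefl E"
  have "\<And>x y. y \<in> nbrs N E x \<Longrightarrow> (w x - w y) * (w x - w y) / dist x y \<ge> 0"
    using nbrs_dist_pos[OF irr] by (simp add: less_imp_le)
  then show ?thesis unfolding Lform_def Lloc_def by (simp add: sum_nonneg)
qed

lemma Kform_zero_edge:
  assumes finN: "finite N" and Esub: "E \<subseteq> N \<times> N" and irr: "irrefl E"
    and gpos: "\<forall>(x,y)\<in>E. 0 < \<gamma> x y"
    and K0: "Kform N E \<gamma> w w = 0" and xy: "(x,y) \<in> E"
  shows "w x = w y"
proof -
  define t where "t = (\<lambda>x y. \<gamma> x y * (w x - w y) * (w x - w y) / dist x y)"
  have tnn: "t x' y' \<ge> 0" if "y' \<in> nbrs N E x'" for x' y'
  proof -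
    have "\<gamma> x' y' > 0" "dist x' y' > 0" using gpos that nbrs_dist_pos[OF irr that] unfolding nbrs_def by auto
    then show ?thesis unfolding t_def by (simp add: mult.assoc)
  qed
  have fn: "finite (nbrs N E x')" for x' using finN unfolding nbrs_def by simp
  have Kl: "Kform N E \<gamma> w w = (\<Sum>x'\<in>N. (1/2) * (\<Sum>y'\<in>nbrs N E x'. t x' y'))"
    unfolding Kform_def Kloc_def t_def ..
  have xN: "x \<in> N" and yn: "y \<in> nbrs N E x" using xy Esub unfolding nbrs_def by auto
  have "(1/2) * (\<Sum>y'\<in>nbrs N E x. t x y') = 0"
  proof -
    have "(\<Sum>x'\<in>N. (1/2) * (\<Sum>y'\<in>nbrs N E x'. t x' y')) = 0" using K0 Kl by simp
    moreover have "\<forall>x'\<in>N. (1/2) * (\<Sum>y'\<in>nbrs N E x'. t x' y') \<ge> 0"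
      using tnn by (simp add: sum_nonneg)
    ultimately show ?thesis using sum_nonneg_eq_0_iff[OF finN, of "\<lambda>x'. (1/2) * (\<Sum>y'\<in>nbrs N E x'. t x' y')"] xN
      by (metis (no_types, lifting))
  qed
  then have "t x y = 0"
    using sum_nonneg_eq_0_iff[OF fn[of x]] tnn yn by auto
  moreover have "\<gamma> x y > 0" "dist x y > 0" using gpos xy nbrs_dist_pos[OF irr yn] by auto
  ultimately have "\<gamma> x y * (w x - w y) * (w x - w y) = 0" unfolding t_def by simp
  with \<open>\<gamma> x y > 0\<close> show ?thesis by simp
qed



definition mw where "mw N E x = (1/2) * (\<Sum>y\<in>nbrs N E x. dist x y)"

lemma Mloc_eq: "Mloc N E x v w = mw N E x * v x * w x"
  unfolding Mloc_def mw_def by (simp add: sum_distrib_right mult.assoc)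

lemma mw_nonneg: "mw N E x \<ge> 0"
  unfolding mw_def by (simp add: sum_nonneg)

lemma Mform_eq: "Mform N E v w = (\<Sum>x\<in>N. mw N E x * v x * w x)"
  unfolding Mform_def Mloc_eq ..

lemma Mform_on_eq: "Mform_on N E T v w = (\<Sum>x\<in>N \<inter> T. mw N E x * v x * w x)"
  unfolding Mform_on_def Mloc_eq ..

lemma sq_aux: "0 \<le> (t::real) \<Longrightarrow> (sqrt t * a) * (sqrt t * b) = t * a * b"
proof -
  assume t: "0 \<le> t"
  have "(sqrt t * a) * (sqrt t * b) = (sqrt t * sqrt t) * a * b" by algebra
  then show ?thesis using t by simp
qed

lemma Mform_CS: "\<bar>Mform N E a b\<bar> \<le> semiM N E a * semiM N E b"
proof -
  define p where "p = (\<lambda>x. sqrt (mw N E x) * a x)"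
  define q where "q = (\<lambda>x. sqrt (mw N E x) * b x)"
  have ab: "Mform N E a b = (\<Sum>x\<in>N. p x * q x)"
    unfolding Mform_eq p_def q_def by (rule sum.cong[OF refl]) (simp add: sq_aux mw_nonneg)
  have aa: "Mform N E a a = (\<Sum>x\<in>N. (p x)\<^sup>2)"
    unfolding Mform_eq p_def power2_eq_square by (rule sum.cong[OF refl]) (simp add: sq_aux mw_nonneg)
  have bb: "Mform N E b b = (\<Sum>x\<in>N. (q x)\<^sup>2)"
    unfolding Mform_eq q_def power2_eq_square by (rule sum.cong[OF refl]) (simp add: sq_aux mw_nonneg)
  have "(Mform N E a b)\<^sup>2 \<le> Mform N E a a * Mform N E b b"
    unfolding ab aa bb by (rule Cauchy_Schwarz_ineq_sum)
  then have "sqrt ((Mform N E a b)\<^sup>2) \<le> sqrt (Mform N E a a * Mform N E b b)"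
    by (rule real_sqrt_le_mono)
  then show ?thesis unfolding semiM_def by (simp add: real_sqrt_mult)
qed


lemma nat_le_ceil: "real k \<le> y \<Longrightarrow> k \<le> nat \<lceil>y\<rceil>"
  by linarith

lemma step_le: assumes "H > 0" "n < m" shows "real n * H + H \<le> real m * H"
proof -
  have "real n + 1 \<le> real m" using assms(2) by simp
  then have "(real n + 1) * H \<le> real m * H" using assms(1) by (simp add: mult_right_mono)
  then show ?thesis by (simp add: algebra_simps)
qed

lemma coord_eq:
  fixes H t :: real
  assumes H: "H > 0"
    and a1: "real n * H \<le> t" and a2: "t < real n * H + H \<or> (real n * H + H = 1 \<and> t \<le> 1)" and a3: "real n * H + H \<le> 1"
    and b1: "real m * H \<le> t" and b2: "t < real m * H + H \<or> (real m * H + H = 1 \<and> t \<le> 1)" and b3: "real m * H + H \<le> 1"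
  shows "n = m"
proof (rule ccontr)
  assume "n \<noteq> m"
  then consider "n < m" | "m < n" by linarith
  then show False
  proof cases
    case 1 then have "real n * H + H \<le> real m * H" by (rule step_le[OF H])
    then show False using a1 a2 a3 b1 b2 b3 H by linarith
  next
    case 2 then have "real m * H + H \<le> real n * H" by (rule step_le[OF H])
    then show False using a1 a2 a3 b1 b2 b3 H by linarith
  qed
qed


lemma cells_disj:
  assumes H: "H > 0" and T: "T \<in> cells H" and T': "T' \<in> cells H" and x: "x \<in> T" "x \<in> T'"
  shows "T = T'"
proof -
  obtain k where k: "T = cube H k" "\<forall>i. real (k i) * H + H \<le> 1" using T unfolding cells_def by auto
  obtain k' where k': "T' = cube H k'" "\<forall>i. real (k' i) * H + H \<le> 1" using T' unfolding cells_def by auto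
  have "k i = k' i" for i
    using x k k' unfolding cube_def
    by (intro coord_eq[OF H, of "k i" "x$i" "k' i"]) auto
  then have "k = k'" by auto
  then show ?thesis using k k' by simp
qed


lemma cells_finite:
  assumes H: "H > 0"
  shows "finite (cells H :: (real^'d) set set)"
proof -
  let ?K = "Pi\<^sub>E (UNIV::'d set) (\<lambda>_. {..nat \<lceil>1/H\<rceil>})"
  have "cells H \<subseteq> cube H ` ?K"
  proof
    fix T :: "(real^'d) set" assume "T \<in> cells H"
    then obtain k where k: "T = cube H k" "\<forall>i. real (k i) * H + H \<le> 1" unfolding cells_def by auto
    have "k i \<le> nat \<lceil>1/H\<rceil>" for i
    proof -
      have "real (k i) * H \<le> 1" using k(2) H by (smt (verit))
      then have "real (k i) \<le> 1/H" using H by (simp add: pos_le_divide_eq)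
      then show ?thesis by (rule nat_le_ceil)
    qed
    then have "k \<in> ?K" by (simp add: PiE_UNIV_domain)
    then show "T \<in> cube H ` ?K" using k by blast
  qed
  moreover have "finite ?K" by (intro finite_PiE) auto
  ultimately show ?thesis by (meson finite_imageI finite_subset)
qed


definition coef where
  "coef N E v T = (if N \<inter> T = {} then 0
       else Mform_on N E T v (\<lambda>_. 1) / Mform_on N E T (\<lambda>_. 1) (\<lambda>_. 1))"

lemma PiH_coef: "PiH N E H v = (\<lambda>z. \<Sum>T\<in>cells H. coef N E v T * indicator T z)"
  unfolding PiH_def coef_def ..

lemma PiH_in_P0: "PiH N E H v \<in> P0 H"
  unfolding P0_def PiH_coef by blast

lemma PiH_on_cell:
  fixes N :: "(real^'d) set"
  assumes H: "H > 0" and T: "T \<in> cells H" and x: "x \<in> T"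
  shows "PiH N E H v x = coef N E v T"
proof -
  have "PiH N E H v x = (\<Sum>T'\<in>cells H. if T' = T then coef N E v T' else 0)"
    unfolding PiH_coef
  proof (rule sum.cong[OF refl])
    fix T' :: "(real^'d) set" assume T': "T' \<in> cells H"
    show "coef N E v T' * indicator T' x = (if T' = T then coef N E v T' else 0)"
    proof (cases "T' = T")
      case True then show ?thesis using x by simp
    next
      case False
      then have "x \<notin> T'" using cells_disj[OF H T' T] x by blast
      then show ?thesis using False by simp
    qed
  qed
  also have "\<dots> = coef N E v T" using T cells_finite[OF H, where 'd='d] by (simp add: sum.delta)
  finally show ?thesis .
qed

lemma Mform_ind: "finite N \<Longrightarrow> Mform N E a (indicator T) = Mform_on N E T a (\<lambda>_. 1)"
  unfolding Mform_eq Mform_on_eq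
  by (simp add: sum.inter_restrict indicator_def if_distrib[where f="\<lambda>t. _ * t"] cong: if_cong)

lemma orth:
  assumes finN: "finite N" and H: "H > 0" and T: "T \<in> cells H"
    and mpos: "\<forall>x\<in>N. mw N E x > 0"
  shows "Mform N E (\<lambda>x. f x - PiH N E H f x) (indicator T) = 0"
proof -
  have "Mform N E (\<lambda>x. f x - PiH N E H f x) (indicator T) = (\<Sum>x\<in>N \<inter> T. mw N E x * (f x - coef N E f T))"
    unfolding Mform_ind[OF finN] Mform_on_eq
    by (rule sum.cong[OF refl]) (simp add: PiH_on_cell[OF H T])
  also have "\<dots> = 0"
  proof (cases "N \<inter> T = {}")
    case True then show ?thesis by simp
  next
    case False
    then obtain x0 where x0: "x0 \<in> N \<inter> T" by blast
    have fin: "finite (N \<inter> T)" using finN by simp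
    have pos: "(\<Sum>x\<in>N \<inter> T. mw N E x) > 0"
      using sum_pos2[OF fin x0, of "mw N E"] mpos x0 mw_nonneg by auto
    have c: "coef N E f T = (\<Sum>x\<in>N \<inter> T. mw N E x * f x) / (\<Sum>x\<in>N \<inter> T. mw N E x)"
      unfolding coef_def Mform_on_eq using False by simp
    have "(\<Sum>x\<in>N \<inter> T. mw N E x * (f x - coef N E f T))
        = (\<Sum>x\<in>N \<inter> T. mw N E x * f x) - coef N E f T * (\<Sum>x\<in>N \<inter> T. mw N E x)"
      by (simp add: algebra_simps sum_subtractf sum_distrib_left)
    also have "\<dots> = 0" using pos unfolding c by simp
    finally show ?thesis .
  qed
  finally show ?thesis .
qed

lemma orth_PiH:
  assumes finN: "finite N" and H: "H > 0"
    and mpos: "\<forall>x\<in>N. mw N E x > 0"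
  shows "Mform N E (\<lambda>x. f x - PiH N E H f x) (PiH N E H e) = 0"
proof -
  have "Mform N E (\<lambda>x. f x - PiH N E H f x) (PiH N E H e)
      = (\<Sum>T\<in>cells H. coef N E e T * Mform N E (\<lambda>x. f x - PiH N E H f x) (indicator T))"
    unfolding PiH_coef[of N E H e] by (rule Mform_sum2[OF cells_finite[OF H]])
  also have "\<dots> = 0" using orth[OF finN H _ mpos] by simp
  finally show ?thesis .
qed

lemma mw_pos:
  assumes finN: "finite N" and Esub: "E \<subseteq> N \<times> N" and irr: "irrefl E" and xz: "(x,z) \<in> E"
  shows "mw N E x > 0"
proof -
  have zn: "z \<in> nbrs N E x" using xz Esub unfolding nbrs_def by auto
  have fn: "finite (nbrs N E x)" using finN unfolding nbrs_def by simp
  have "dist x z > 0" by (rule nbrs_dist_pos[OF irr zn])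
  moreover have "dist x z \<le> (\<Sum>y\<in>nbrs N E x. dist x y)"
    by (rule member_le_sum[OF zn _ fn]) simp
  ultimately have "(\<Sum>y\<in>nbrs N E x. dist x y) > 0" by linarith
  then show ?thesis unfolding mw_def by simp
qed



lemma sum_fun_app: "(\<Sum>z\<in>S. (f z :: 'a \<Rightarrow> real)) x = (\<Sum>z\<in>S. f z x)"
  by (induction S rule: infinite_finite_induct) (auto simp: plus_fun_def zero_fun_def)

lemma fin_inj_surj:
  fixes A :: "('a \<Rightarrow> real) \<Rightarrow> ('a \<Rightarrow> real)" and D :: "'a set"
  assumes fD: "finite D"
    and lin: "\<And>a b v w. A (\<lambda>x. a * v x + b * w x) = (\<lambda>z. a * A v z + b * A w z)"
    and supp: "\<And>v z. z \<notin> D \<Longrightarrow> A v z = 0"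
    and inj: "\<And>v. (\<forall>x. x \<notin> D \<longrightarrow> v x = 0) \<Longrightarrow> A v = (\<lambda>_. 0) \<Longrightarrow> v = (\<lambda>_. 0)"
    and bD: "\<forall>z. z \<notin> D \<longrightarrow> b z = 0"
  shows "\<exists>v. (\<forall>x. x \<notin> D \<longrightarrow> v x = 0) \<and> A v = b"
proof -
  define s where "s = (\<lambda>c (f::'a\<Rightarrow>real) x. c * f x)"
  interpret vs: vector_space s
    unfolding s_def vector_space_def module_def by (auto simp: fun_eq_iff algebra_simps)
  have linA: "Vector_Spaces.linear s s A"
    unfolding Vector_Spaces.linear_iff
  proof (intro conjI allI)
    show "vector_space s" by (rule vs.vector_space_axioms)
    show "vector_space s" by (rule vs.vector_space_axioms)
    fix x y show "A (x + y) = A x + A y"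
      using lin[of 1 x 1 y] by (simp add: plus_fun_def)
  next
    fix c x show "A (s c x) = s c (A x)"
      using lin[of c x 0 x] by (simp add: s_def sum_fun_app)
  qed
  interpret lA: Vector_Spaces.linear s s A by (rule linA)
  define F where "F = {v::'a\<Rightarrow>real. \<forall>x. x \<notin> D \<longrightarrow> v x = 0}"
  define \<delta> where "\<delta> = (\<lambda>(z::'a) (x::'a). if x = z then (1::real) else 0)"
  define B where "B = \<delta> ` D"
  have injd: "inj \<delta>"
    unfolding inj_def \<delta>_def by (metis zero_neq_one)
  have fB: "finite B" using fD B_def by simp
  have cardB: "card B = card D" unfolding B_def using injd by (simp add: card_image inj_on_subset)
  have subF: "vs.subspace F"
    by (rule vs.subspaceI) (auto simp: F_def s_def plus_fun_def)
  have BF: "B \<subseteq> F" unfolding B_def F_def \<delta>_def by auto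
  have spanBF: "vs.span B \<subseteq> F" using vs.span_minimal[OF BF subF] .
  have FspanB: "F \<subseteq> vs.span B"
  proof
    fix v assume v: "v \<in> F"
    have "v = (\<Sum>z\<in>D. s (v z) (\<delta> z))"
    proof
      fix x
      show "v x = (\<Sum>z\<in>D. s (v z) (\<delta> z)) x"
      proof (cases "x \<in> D")
        case True
        have "(\<Sum>z\<in>D. s (v z) (\<delta> z)) x = (\<Sum>z\<in>D. v z * \<delta> z x)"
          by (simp add: s_def sum_fun_app)
        also have "\<dots> = v x" using True fD by (simp add: \<delta>_def if_distrib[where f="\<lambda>t. v _ * t"] cong: if_cong)
        finally show ?thesis by simp
      next
        case False
        have "(\<Sum>z\<in>D. s (v z) (\<delta> z)) x = (\<Sum>z\<in>D. v z * \<delta> z x)"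
          by (simp add: s_def sum_fun_app)
        also have "\<dots> = 0" using False by (auto simp: \<delta>_def intro!: sum.neutral)
        finally show ?thesis using v False F_def by simp
      qed
    qed
    also have "\<dots> \<in> vs.span B"
      by (intro vs.span_sum vs.span_scale vs.span_base) (auto simp: B_def)
    finally show "v \<in> vs.span B" .
  qed
  have injF: "inj_on A F"
  proof (rule inj_onI)
    fix v w assume v: "v \<in> F" and w: "w \<in> F" and eq: "A v = A w"
    have "A (\<lambda>x. 1 * v x + (-1) * w x) = (\<lambda>z. 1 * A v z + (-1) * A w z)"
      by (rule lin)
    then have h1: "A (\<lambda>x. 1 * v x + (-1) * w x) = (\<lambda>_. 0)"
      using eq by simp
    have h2: "\<forall>x. x \<notin> D \<longrightarrow> 1 * v x + (-1) * w x = 0" using v w F_def by auto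
    have "(\<lambda>x. 1 * v x + (-1) * w x) = (\<lambda>_. 0)" by (rule inj[OF h2 h1])
    then show "v = w" by (simp add: fun_eq_iff)
  qed
  have indB: "vs.independent B"
    unfolding vs.independent_explicit_finite_subsets
  proof (intro allI impI ballI)
    fix S u v assume S: "S \<subseteq> B" and "finite S" and sum0: "(\<Sum>v\<in>S. s (u v) v) = 0" and vS: "v \<in> S"
    obtain z where z: "z \<in> D" "v = \<delta> z" using S vS B_def by auto
    have "0 = (\<Sum>w\<in>S. s (u w) w) z" using sum0 by (simp add: zero_fun_def)
    also have "\<dots> = (\<Sum>w\<in>S. u w * w z)" by (simp add: s_def sum_fun_app)
    also have "\<dots> = (\<Sum>w\<in>S. if w = v then u w else 0)"
    proof (rule sum.cong[OF refl])
      fix w assume "w \<in> S"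
      then obtain z' where wz: "w = \<delta> z'" using S B_def by auto
      show "u w * w z = (if w = v then u w else 0)"
      proof (cases "z' = z")
        case True then show ?thesis using z wz by (simp add: \<delta>_def)
      next
        case False
        then have "w \<noteq> v" using injd z wz by (auto dest: injD)
        then show ?thesis using False wz z by (simp add: \<delta>_def)
      qed
    qed
    also have "\<dots> = u v" using vS \<open>finite S\<close> by (simp add: sum.delta')
    finally show "u v = 0" by simp
  qed
  have indAB: "vs.independent (A ` B)"
    by (rule lA.independent_injective_image[OF indB inj_on_subset[OF injF spanBF]])
  have cardAB: "card (A ` B) = card D"
    using cardB inj_on_subset[OF injF BF] by (simp add: card_image)
  have ABF: "A ` B \<subseteq> F" using supp F_def by auto
  have bF: "b \<in> F" using bD F_def by auto
  have "b \<in> vs.span (A ` B)"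
  proof (rule ccontr)
    assume nb: "b \<notin> vs.span (A ` B)"
    have ind2: "vs.independent (insert b (A ` B))"
      by (rule vs.independent_insertI[OF nb indAB])
    have "insert b (A ` B) \<subseteq> vs.span B" using ABF bF FspanB by auto
    from vs.independent_span_bound[OF fB ind2 this]
    have "card (insert b (A ` B)) \<le> card B" by simp
    moreover have "b \<notin> A ` B" using nb vs.span_base by blast
    ultimately show False using fB cardAB cardB by simp
  qed
  then obtain v where "v \<in> vs.span B" "A v = b" using lA.span_image by auto
  then show ?thesis using spanBF F_def by auto
qed


lemma exists_solution:
  fixes N :: "(real^'d) set"
  assumes finN: "finite N" and Esub: "E \<subseteq> N \<times> N" and irr: "irrefl E"
    and conn: "\<forall>x\<in>N. \<forall>y\<in>N. (x,y) \<in> E\<^sup>*" and GamN: "N \<inter> \<Gamma> \<noteq> {}"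
    and gpos: "\<forall>(x,y)\<in>E. 0 < \<gamma> x y"
  shows "\<exists>w. solves N E \<gamma> \<Gamma> g w"
proof -
  define D where "D = N - \<Gamma>"
  define A where "A = (\<lambda>w z. if z \<in> D then Kform N E \<gamma> w (dl z) else 0)"
  define b where "b = (\<lambda>z. if z \<in> D then Mform N E g (dl z) else 0)"
  have "\<exists>v. (\<forall>x. x \<notin> D \<longrightarrow> v x = 0) \<and> A v = b"
  proof (rule fin_inj_surj)
    show "finite D" using finN D_def by simp
    show "\<And>a b v w. A (\<lambda>x. a * v x + b * w x) = (\<lambda>z. a * A v z + b * A w z)"
      unfolding A_def by (simp add: Kform_lin1 fun_eq_iff)
    show "\<And>v z. z \<notin> D \<Longrightarrow> A v z = 0" unfolding A_def by simp
    show "\<forall>z. z \<notin> D \<longrightarrow> b z = 0" unfolding b_def by simp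
    fix v assume vD: "\<forall>x. x \<notin> D \<longrightarrow> v x = 0" and Av: "A v = (\<lambda>_. 0)"
    have "Kform N E \<gamma> v v = (\<Sum>z\<in>N. v z * Kform N E \<gamma> v (dl z))" by (rule Kform_expand[OF finN])
    also have "\<dots> = 0"
    proof (rule sum.neutral, intro ballI)
      fix z assume "z \<in> N"
      show "v z * Kform N E \<gamma> v (dl z) = 0"
      proof (cases "z \<in> D")
        case True
        then have "A v z = Kform N E \<gamma> v (dl z)" by (simp add: A_def)
        moreover have "A v z = 0" using Av by simp
        ultimately show ?thesis by simp
      next
        case False then show ?thesis using vD by simp
      qed
    qed
    finally have K0: "Kform N E \<gamma> v v = 0" .
    obtain z0 where z0: "z0 \<in> N" "z0 \<in> \<Gamma>" using GamN by auto
    have edge: "v x = v y" if "(x,y) \<in> E" for x y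
      using Kform_zero_edge[OF finN Esub irr gpos K0 that] .
    have rt: "v x = v y" if "(x,y) \<in> E\<^sup>*" for x y
      using that by (induction rule: rtrancl_induct) (auto dest: edge)
    have "v x = v z0" if "x \<in> N" for x using conn z0 that rt by blast
    moreover have "v z0 = 0" using vD z0 D_def by auto
    ultimately show "v = (\<lambda>_. 0)" using vD D_def by (auto simp: fun_eq_iff)
  qed
  then obtain w where wD: "\<forall>x. x \<notin> D \<longrightarrow> w x = 0" and Aw: "A w = b" by blast
  have "solves N E \<gamma> \<Gamma> g w"
    unfolding solves_def Vsp_def
  proof (intro conjI ballI)
    show "w \<in> {v. \<forall>x\<in>N \<inter> \<Gamma>. v x = 0}" using wD D_def by auto
  next
    fix v :: "real^'d \<Rightarrow> real" assume v: "v \<in> {v. \<forall>x\<in>N \<inter> \<Gamma>. v x = 0}"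
    have "Kform N E \<gamma> w v = (\<Sum>z\<in>N. v z * Kform N E \<gamma> w (dl z))" by (rule Kform_expand[OF finN])
    also have "\<dots> = (\<Sum>z\<in>N. v z * Mform N E g (dl z))"
    proof (rule sum.cong[OF refl])
      fix z assume zN: "z \<in> N"
      show "v z * Kform N E \<gamma> w (dl z) = v z * Mform N E g (dl z)"
      proof (cases "z \<in> D")
        case True
        have "A w z = b z" using Aw by simp
        then show ?thesis using True by (simp add: A_def b_def)
      next
        case False then have "v z = 0" using v zN D_def by auto
        then show ?thesis by simp
      qed
    qed
    also have "\<dots> = Mform N E g v" by (rule Mform_expand[OF finN, symmetric])
    finally show "Kform N E \<gamma> w v = Mform N E g v" .
  qed
  then show ?thesis by blast
qed



theorem mainTheorem5:
  fixes N :: "(real^'d) set" and E :: "((real^'d) \<times> (real^'d)) set"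
    and \<Gamma> :: "(real^'d) set" and \<gamma> :: "real^'d \<Rightarrow> real^'d \<Rightarrow> real"
    and \<alpha> \<beta> C\<^sub>\<Pi> H :: real and Hs :: "real set"
    and f u uH :: "real^'d \<Rightarrow> real"
  assumes finN: "finite N" and cardN: "card N \<ge> 2" and NOmega: "N \<subseteq> Omega"
    and Esub: "E \<subseteq> N \<times> N" and Esym: "sym E" and Eirr: "irrefl E"
    and conn: "\<forall>x\<in>N. \<forall>y\<in>N. (x,y) \<in> E\<^sup>*"
    and Gam: "\<Gamma> \<subseteq> frontier Omega" and GamN: "N \<inter> \<Gamma> \<noteq> {}"
    and alpha: "0 < \<alpha>" "\<alpha> \<le> \<beta>"
    and gsym: "\<forall>(x,y)\<in>E. \<gamma> x y = \<gamma> y x"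
    and grange: "\<forall>(x,y)\<in>E. \<alpha> \<le> \<gamma> x y \<and> \<gamma> x y \<le> \<beta>"
    and Hs: "finite Hs" "\<forall>H'\<in>Hs. H' > 0 \<and> (\<exists>n::nat. 1 / H' = real n)"
    and netconn: "network_connectivity N E Hs"
    and poinc: "poincare_scaling N E Hs"
    and CPi: "C\<^sub>\<Pi> > 0"
    and CPi_bound: "\<forall>v. \<forall>H'\<in>Hs. semiM N E (\<lambda>x. v x - PiH N E H' v x) \<le> C\<^sub>\<Pi> * H' * semiL N E v"
    and H: "H \<in> Hs"
    and u: "solves N E \<gamma> \<Gamma> f u"
    and uH: "uH \<in> VH N E \<gamma> \<Gamma> H"
    and galerkin: "\<forall>vH\<in>VH N E \<gamma> \<Gamma> H. Kform N E \<gamma> uH vH = Mform N E f vH"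
  shows "semiL N E (\<lambda>x. u x - uH x)
           \<le> C\<^sub>\<Pi> / \<alpha> * H * semiM N E (\<lambda>x. f x - PiH N E H f x)
       \<and> C\<^sub>\<Pi> / \<alpha> * H * semiM N E (\<lambda>x. f x - PiH N E H f x)
           \<le> C\<^sub>\<Pi>^2 / \<alpha> * H^2 * semiL N E f"
proof -
  have H0: "H > 0" using Hs(2) H by blast
  have gpos: "\<forall>(x,y)\<in>E. 0 < \<gamma> x y" using grange alpha(1) by fastforce
  have gal: "\<forall>(x,y)\<in>E. \<alpha> \<le> \<gamma> x y" using grange by fastforce
  have uV: "u \<in> Vsp N \<Gamma>" and Ku: "\<And>v. v \<in> Vsp N \<Gamma> \<Longrightarrow> Kform N E \<gamma> u v = Mform N E f v"
    using u unfolding solves_def by auto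
  obtain g where "g \<in> P0 H" "solves N E \<gamma> \<Gamma> g uH" using uH unfolding VH_def by blast
  then have uHV: "uH \<in> Vsp N \<Gamma>" unfolding solves_def by auto
  define e where "e = (\<lambda>x. u x - uH x)"
  define r where "r = (\<lambda>x. f x - PiH N E H f x)"
  have eV: "e \<in> Vsp N \<Gamma>" using uV uHV unfolding Vsp_def e_def by auto
  have uHuH: "Kform N E \<gamma> uH uH = Mform N E f uH" using galerkin uH by blast
  have Kee: "Kform N E \<gamma> e e = Mform N E f e"
  proof -
    have "Kform N E \<gamma> uH e = Kform N E \<gamma> e uH" by (rule Kform_sym)
    also have "\<dots> = Kform N E \<gamma> u uH - Kform N E \<gamma> uH uH" unfolding e_def by (rule Kform_diff1)
    also have "\<dots> = 0" using Ku[OF uHV] uHuH by simp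
    finally have "Kform N E \<gamma> uH e = 0" .
    moreover have "Kform N E \<gamma> e e = Kform N E \<gamma> u e - Kform N E \<gamma> uH e"
      unfolding e_def by (rule Kform_diff1)
    ultimately show ?thesis using Ku[OF eV] by simp
  qed
  obtain w where w: "solves N E \<gamma> \<Gamma> (PiH N E H f) w"
    using exists_solution[OF finN Esub Eirr conn GamN gpos] by blast
  have wVH: "w \<in> VH N E \<gamma> \<Gamma> H" unfolding VH_def using w PiH_in_P0 by blast
  have wV: "w \<in> Vsp N \<Gamma>" and Kw: "\<And>v. v \<in> Vsp N \<Gamma> \<Longrightarrow> Kform N E \<gamma> w v = Mform N E (PiH N E H f) v"
    using w unfolding solves_def by auto
  have MPie: "Mform N E (PiH N E H f) e = 0"
  proof -
    have "Mform N E (PiH N E H f) e = Mform N E (PiH N E H f) u - Mform N E (PiH N E H f) uH"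
      unfolding e_def by (rule Mform_diff2)
    also have "Mform N E (PiH N E H f) u = Mform N E f w"
      using Kw[OF uV] Kform_sym[of N E \<gamma> w u] Ku[OF wV] by simp
    also have "Mform N E (PiH N E H f) uH = Mform N E f w"
      using Kw[OF uHV] Kform_sym[of N E \<gamma> w uH] galerkin wVH by simp
    finally show ?thesis by simp
  qed
  have mpos: "\<forall>x\<in>N. mw N E x > 0"
  proof
    fix x assume xN: "x \<in> N"
    have "\<not> N \<subseteq> {x}"
    proof
      assume "N \<subseteq> {x}"
      then have "card N \<le> card {x}" by (rule card_mono[rotated]) simp
      then show False using cardN by simp
    qed
    then obtain y where y: "y \<in> N" "y \<noteq> x" by blast
    have "(x,y) \<in> E\<^sup>*" using conn xN y by blast
    then obtain z where "(x,z) \<in> E" using y(2) by (cases rule: converse_rtranclE) auto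
    then show "mw N E x > 0" by (rule mw_pos[OF finN Esub Eirr])
  qed
  have Mfe: "Mform N E f e = Mform N E r (\<lambda>x. e x - PiH N E H e x)"
  proof -
    have "Mform N E r e = Mform N E f e - Mform N E (PiH N E H f) e"
      unfolding r_def by (rule Mform_diff1)
    moreover have "Mform N E r (\<lambda>x. e x - PiH N E H e x) = Mform N E r e - Mform N E r (PiH N E H e)"
      by (rule Mform_diff2)
    moreover have "Mform N E r (PiH N E H e) = 0"
      unfolding r_def by (rule orth_PiH[OF finN H0 mpos])
    ultimately show ?thesis using MPie by simp
  qed
  have sMnn: "semiM N E v \<ge> 0" for v
  proof -
    have "Mform N E v v \<ge> 0" unfolding Mform_eq
      by (rule sum_nonneg) (simp add: mw_nonneg mult.assoc)
    then show ?thesis unfolding semiM_def by simp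
  qed
  have sLnn: "semiL N E v \<ge> 0" for v using Lform_nonneg[OF Eirr] unfolding semiL_def by simp
  have Lsq: "Lform N E e e = (semiL N E e)\<^sup>2"
    unfolding semiL_def using Lform_nonneg[OF Eirr] by simp
  have bnd: "semiM N E (\<lambda>x. e x - PiH N E H e x) \<le> C\<^sub>\<Pi> * H * semiL N E e"
    using CPi_bound H by blast
  have "\<alpha> * (semiL N E e)\<^sup>2 \<le> Kform N E \<gamma> e e"
    unfolding Lsq[symmetric] by (rule Kform_ge_L[OF Eirr gal]) (use alpha in simp)
  also have "\<dots> = Mform N E r (\<lambda>x. e x - PiH N E H e x)" using Kee Mfe by simp
  also have "\<dots> \<le> semiM N E r * semiM N E (\<lambda>x. e x - PiH N E H e x)"
    using Mform_CS[of N E r "\<lambda>x. e x - PiH N E H e x"] by linarith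
  also have "\<dots> \<le> semiM N E r * (C\<^sub>\<Pi> * H * semiL N E e)"
    by (rule mult_left_mono[OF bnd sMnn])
  finally have key: "\<alpha> * (semiL N E e)\<^sup>2 \<le> semiM N E r * (C\<^sub>\<Pi> * H * semiL N E e)" .
  have first: "semiL N E e \<le> C\<^sub>\<Pi> / \<alpha> * H * semiM N E r"
  proof (cases "semiL N E e = 0")
    case True
    have "C\<^sub>\<Pi> / \<alpha> * H * semiM N E r \<ge> 0" using CPi alpha H0 sMnn by simp
    then show ?thesis using True by simp
  next
    case False
    then have pos: "semiL N E e > 0" using sLnn[of e] by simp
    have "(\<alpha> * semiL N E e) * semiL N E e \<le> (semiM N E r * C\<^sub>\<Pi> * H) * semiL N E e"
      using key by (simp add: power2_eq_square algebra_simps)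
    then have "\<alpha> * semiL N E e \<le> semiM N E r * C\<^sub>\<Pi> * H"
      using pos by (rule mult_right_le_imp_le)
    then have "semiL N E e \<le> (semiM N E r * C\<^sub>\<Pi> * H) / \<alpha>"
      using alpha(1) by (simp add: pos_le_divide_eq mult.commute)
    then show ?thesis by (simp add: algebra_simps)
  qed
  have second: "C\<^sub>\<Pi> / \<alpha> * H * semiM N E r \<le> C\<^sub>\<Pi>^2 / \<alpha> * H^2 * semiL N E f"
  proof -
    have b: "semiM N E r \<le> C\<^sub>\<Pi> * H * semiL N E f" using CPi_bound H unfolding r_def by blast
    have c: "C\<^sub>\<Pi> / \<alpha> * H \<ge> 0" using CPi alpha H0 by simp
    have "C\<^sub>\<Pi> / \<alpha> * H * semiM N E r \<le> C\<^sub>\<Pi> / \<alpha> * H * (C\<^sub>\<Pi> * H * semiL N E f)"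
      by (rule mult_left_mono[OF b c])
    also have "\<dots> = C\<^sub>\<Pi>^2 / \<alpha> * H^2 * semiL N E f" by (simp add: power2_eq_square algebra_simps)
    finally show ?thesis .
  qed
  show ?thesis using first second unfolding e_def r_def by simp
qed

end
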